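(* Let $G$ and $H$ be word-representable graphs with $|G| \ge |H|$. Then $l(G \,\square\, H) \le |H|\,l(G) + |G|\,l(H) + (|H|^2 - 1)|G|$.
   Context: All graphs are simple and undirected; $|G|$ denotes the number of vertices of $G$. Letters $x,y$ alternate in a word $w$ if deleting all other letters from $w$ yields $xyxy\ldots$ or $yxyx\ldots$ (of either parity). A word $w$ over $V(G)$ represents $G$ if every vertex occurs in $w$ and for all distinct $x,y$, $xy\in E(G)$ iff $x,y$ alternate in $w$; $G$ is word-representable if such a word exists, and $l(G)$ is the minimum length of a word representing $G$. The Cartesian product $G\,\square\,H$ has vertex set $V(G)\times V(H)$, with $(u,v)$ adjacent to $(u',v')$ iff either $u=u'$ and $vv'\in E(H)$, or $v=v'$ and $uu'\in E(G)$. *)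

theory Defs
  imports Main
begin

definition simple_graph :: "'a set \<Rightarrow> ('a \<Rightarrow> 'a \<Rightarrow> bool) \<Rightarrow> bool" where
  "simple_graph V E \<longleftrightarrow> finite V \<and> (\<forall>x y. E x y \<longrightarrow> x \<in> V \<and> y \<in> V \<and> x \<noteq> y)
     \<and> (\<forall>x y. E x y \<longrightarrow> E y x)"

definition no_adj_repeat :: "'a list \<Rightarrow> bool" where
  "no_adj_repeat xs \<longleftrightarrow> (\<forall>i. Suc i < length xs \<longrightarrow> xs ! i \<noteq> xs ! Suc i)"

definition alternate :: "'a list \<Rightarrow> 'a \<Rightarrow> 'a \<Rightarrow> bool" where
  "alternate w x y \<longleftrightarrow> no_adj_repeat (filter (\<lambda>z. z = x \<or> z = y) w)"

definition represents :: "'a set \<Rightarrow> ('a \<Rightarrow> 'a \<Rightarrow> bool) \<Rightarrow> 'a list \<Rightarrow> bool" where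
  "represents V E w \<longleftrightarrow> set w = V \<and>
     (\<forall>x\<in>V. \<forall>y\<in>V. x \<noteq> y \<longrightarrow> (E x y \<longleftrightarrow> alternate w x y))"

definition word_representable :: "'a set \<Rightarrow> ('a \<Rightarrow> 'a \<Rightarrow> bool) \<Rightarrow> bool" where
  "word_representable V E \<longleftrightarrow> (\<exists>w. represents V E w)"

definition min_rep_length :: "'a set \<Rightarrow> ('a \<Rightarrow> 'a \<Rightarrow> bool) \<Rightarrow> nat" where
  "min_rep_length V E = (LEAST n. \<exists>w. represents V E w \<and> length w = n)"

definition cart_edge :: "('a \<Rightarrow> 'a \<Rightarrow> bool) \<Rightarrow> ('b \<Rightarrow> 'b \<Rightarrow> bool) \<Rightarrow> ('a \<times> 'b) \<Rightarrow> ('a \<times> 'b) \<Rightarrow> bool" where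
  "cart_edge E1 E2 p q \<longleftrightarrow>
     (fst p = fst q \<and> E2 (snd p) (snd q)) \<or> (snd p = snd q \<and> E1 (fst p) (fst q))"

end

theory Submission
  imports Defs
begin


lemma nar_Nil[simp]: "no_adj_repeat []" by (simp add: no_adj_repeat_def)
lemma nar_single[simp]: "no_adj_repeat [x]" by (simp add: no_adj_repeat_def)
lemma nar_CC[simp]: "no_adj_repeat (x # y # xs) \<longleftrightarrow> x \<noteq> y \<and> no_adj_repeat (y # xs)"
  unfolding no_adj_repeat_def
  apply (rule iffI)
   apply (intro conjI allI impI)
    apply (erule_tac x=0 in allE, simp)
   apply (erule_tac x="Suc i" in allE, simp)
  apply clarify
  apply (case_tac i; simp)
  done

lemma nar_Cons: "no_adj_repeat (x # xs) \<longleftrightarrow> (xs = [] \<or> (x \<noteq> hd xs \<and> no_adj_repeat xs))"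
  by (cases xs) auto

lemma nar_append: "no_adj_repeat (xs @ ys) \<longleftrightarrow> no_adj_repeat xs \<and> no_adj_repeat ys \<and> (xs \<noteq> [] \<longrightarrow> ys \<noteq> [] \<longrightarrow> last xs \<noteq> hd ys)"
proof (induction xs)
  case Nil then show ?case by simp
next
  case (Cons x xs)
  then show ?case by (cases xs; cases ys) (auto simp: nar_Cons)
qed

lemma nar_map: "inj_on f (set xs) \<Longrightarrow> no_adj_repeat (map f xs) \<longleftrightarrow> no_adj_repeat xs"
proof (induction xs)
  case Nil then show ?case by simp
next
  case (Cons x xs)
  then show ?case by (cases xs) (auto simp: inj_on_def)
qed

lemma nar_pairs: "a \<noteq> b \<Longrightarrow> no_adj_repeat (concat (map (\<lambda>_. [a,b]) xs)) \<and>
   (xs \<noteq> [] \<longrightarrow> hd (concat (map (\<lambda>_. [a,b]) xs)) = a \<and> last (concat (map (\<lambda>_. [a,b]) xs)) = b)"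
  by (induction xs) (auto simp: nar_Cons)

lemma last_remdups: "xs \<noteq> [] \<Longrightarrow> last (remdups xs) = last xs"
proof (induction xs)
  case Nil then show ?case by simp
next
  case (Cons x xs) then show ?case by (cases "xs = []") auto
qed

lemma five_cases: assumes "distinct L" "set L \<subseteq> {x,y}" shows
  "L = [] \<or> L = [x] \<or> L = [y] \<or> L = [x,y] \<or> L = [y,x]"
proof (cases L)
  case (Cons a L1)
  then show ?thesis
  proof (cases L1)
    case (Cons b L2)
    then show ?thesis using \<open>L = a # L1\<close> \<open>distinct L\<close> \<open>set L \<subseteq> {x,y}\<close>
      by (cases L2) auto
  qed (use \<open>set L \<subseteq> {x,y}\<close> in auto)
qed simp

lemma two_cases: "distinct L \<Longrightarrow> set L = {x,y} \<Longrightarrow> x \<noteq> y \<Longrightarrow> L = [x,y] \<or> L = [y,x]"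
  using five_cases[of L x y] by auto

lemma break:
  assumes "ys \<noteq> []" "set ys \<subseteq> {a,b}" "a \<noteq> b"
    "no_adj_repeat (ys @ concat (map f Ws))"
    "\<exists>S\<in>set Ws. f S = [b,a]"
    "\<forall>S\<in>set Ws. set (f S) \<subseteq> {a,b}"
    "\<forall>S\<in>set Ws. f S \<noteq> [b,a] \<longrightarrow> s S = f S"
    "\<forall>S\<in>set Ws. f S = [b,a] \<longrightarrow> s S = [a,b]"
  shows "\<not> no_adj_repeat (ys @ concat (map s Ws))"
  using assms
proof (induction Ws arbitrary: ys)
  case Nil then show ?case by simp
next
  case (Cons S Ws)
  show ?case
  proof (cases "f S = [b,a]")
    case True
    have "last ys \<in> {a,b}" using Cons.prems(1,2) last_in_set by blast
    moreover have "last ys \<noteq> b" using Cons.prems(1,4) True by (auto simp: nar_append)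
    ultimately have "last ys = a" by auto
    then show ?thesis using True Cons.prems(1,8) by (auto simp: nar_append)
  next
    case False
    have "\<not> no_adj_repeat ((ys @ f S) @ concat (map s Ws))"
      apply (rule Cons.IH)
      using Cons.prems False by auto
    moreover have "s S = f S" using Cons.prems(7) False by auto
    ultimately show ?thesis by simp
  qed
qed


definition blk :: "'a list \<Rightarrow> 'b list \<Rightarrow> ('a \<times> 'b) list" where
  "blk A S = concat (map (\<lambda>a. map (Pair a) S) A)"

definition tblk :: "'a list \<Rightarrow> 'b list list \<Rightarrow> ('a \<times> 'b) list" where
  "tblk A Ws = concat (map (blk A) Ws)"

lemma filter_blk: "filter P (blk A S) = concat (map (\<lambda>a. map (Pair a) (filter (\<lambda>b. P (a,b)) S)) A)"
  by (simp add: blk_def filter_concat filter_map comp_def)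

lemma concat_if_single: "concat (map (\<lambda>x. if Q x then [f x] else []) A) = map f (filter Q A)"
  by (induction A) auto

lemma concat_filter_irrel: "(\<forall>a\<in>set A. \<not> Q a \<longrightarrow> F a = []) \<Longrightarrow> concat (map F A) = concat (map F (filter Q A))"
  by (induction A) auto

lemma filter_eq1: "distinct S \<Longrightarrow> filter (\<lambda>b. b = c) S = (if c \<in> set S then [c] else [])"
  by (induction S) (auto simp: filter_empty_conv)

lemma fe1: "distinct S \<Longrightarrow> filter (\<lambda>b. a = g \<and> b = h \<or> a = g' \<and> b = h) S = (if (a = g \<or> a = g') \<and> h \<in> set S then [h] else [])"
  by (induction S) auto

lemma fe2: "filter (\<lambda>b. (a, b) = (g, h) \<or> (a, b) = (g, h')) S = (if a = g then filter (\<lambda>b. b = h \<or> b = h') S else [])"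
  by (induction S) auto

lemma fe3: "distinct S \<Longrightarrow> g \<noteq> g' \<Longrightarrow> filter (\<lambda>b. (a, b) = (g, h) \<or> (a, b) = (g', h')) S =
   (if a = g \<and> h \<in> set S then [h] else []) @ (if a = g' \<and> h' \<in> set S then [h'] else [])"
  by (induction S) auto

lemma blk_t1: "distinct S \<Longrightarrow> filter (\<lambda>z. z = (g,h) \<or> z = (g',h)) (blk A S) =
   (if h \<in> set S then map (\<lambda>x. (x,h)) (filter (\<lambda>x. x = g \<or> x = g') A) else [])"
  unfolding filter_blk by (induction A) (auto simp: fe1)

lemma blk_t2: "filter (\<lambda>z. z = (g,h) \<or> z = (g,h')) (blk A S) =
   concat (map (\<lambda>x. if x = g then map (Pair g) (filter (\<lambda>b. b = h \<or> b = h') S) else []) A)"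
  unfolding filter_blk by (induction A) (auto simp: fe2)

lemma blk_t2d: assumes "distinct A" "g \<in> set A" shows "filter (\<lambda>z. z = (g,h) \<or> z = (g,h')) (blk A S) =
   map (Pair g) (filter (\<lambda>b. b = h \<or> b = h') S)"
proof -
  have "filter (\<lambda>x. x = g) A = [g]" using assms
    by (induction A) (auto simp: filter_empty_conv)
  then show ?thesis unfolding blk_t2
    by (subst concat_filter_irrel[where Q="\<lambda>x. x = g"]) auto
qed

lemma blk_t3: "distinct S \<Longrightarrow> g \<noteq> g' \<Longrightarrow> h \<in> set S \<Longrightarrow> h' \<in> set S \<Longrightarrow>
  filter (\<lambda>z. z = (g,h) \<or> z = (g',h')) (blk A S) =
   map (\<lambda>x. if x = g then (g,h) else (g',h')) (filter (\<lambda>x. x = g \<or> x = g') A)"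
  unfolding filter_blk by (induction A) (auto simp: fe3 filter_eq1)

lemma blk_t3d: assumes "distinct S" "g \<noteq> g'" "filter (\<lambda>x. x = g \<or> x = g') A = [g,g']"
  shows "filter (\<lambda>z. z = (g,h) \<or> z = (g',h')) (blk A S) =
   (if h \<in> set S then [(g,h)] else []) @ (if h' \<in> set S then [(g',h')] else [])"
proof -
  have "filter (\<lambda>z. z = (g,h) \<or> z = (g',h')) (blk A S) =
     concat (map (\<lambda>a. map (Pair a) (filter (\<lambda>b. (a,b) = (g,h) \<or> (a,b) = (g',h')) S)) (filter (\<lambda>x. x = g \<or> x = g') A))"
    unfolding filter_blk by (rule concat_filter_irrel) auto
  also have "\<dots> = (if h \<in> set S then [(g,h)] else []) @ (if h' \<in> set S then [(g',h')] else [])"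
    using assms by (simp add: fe3 filter_eq1)
  finally show ?thesis .
qed

lemma set_blk: "set (blk A S) = set A \<times> set S" by (auto simp: blk_def)
lemma length_blk: "length (blk A S) = length A * length S" by (induction A) (auto simp: blk_def)
lemma length_tblk: "length (tblk A Ws) = length A * length (concat Ws)"
  by (induction Ws) (auto simp: tblk_def length_blk algebra_simps)
lemma set_tblk: "set (tblk A Ws) = set A \<times> \<Union>(set ` set Ws)"
  by (auto simp: tblk_def set_blk)


lemma concat_if_const: "concat (map (\<lambda>S. if Q S then L else []) Ws) = concat (map (\<lambda>_. L) (filter Q Ws))"
  by (induction Ws) auto

lemma type1:
  assumes "filter (\<lambda>x. x = g \<or> x = g') \<sigma> = [g,g']" "g \<noteq> g'" "\<forall>S\<in>set Ws. distinct S"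
    "h \<in> set \<pi>" "distinct \<pi>" "remdups (filter (\<lambda>x. x = g \<or> x = g') u) = [g,g']"
  shows "no_adj_repeat (filter (\<lambda>z. z = (g,h) \<or> z = (g',h)) (blk u \<pi> @ tblk \<sigma> Ws))
     \<longleftrightarrow> no_adj_repeat (filter (\<lambda>x. x = g \<or> x = g') u)"
proof -
  define U where "U = filter (\<lambda>x. x = g \<or> x = g') u"
  have X: "filter (\<lambda>z. z = (g,h) \<or> z = (g',h)) (blk u \<pi>) = map (\<lambda>x. (x,h)) U"
    using assms by (simp add: blk_t1 U_def)
  have "filter (\<lambda>z. z = (g,h) \<or> z = (g',h)) (tblk \<sigma> Ws) =
      concat (map (\<lambda>S. if h \<in> set S then [(g,h),(g',h)] else []) Ws)"
    unfolding tblk_def filter_concat map_map comp_def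
    using assms(1,3) by (intro arg_cong[where f=concat] map_cong) (auto simp: blk_t1)
  also have "\<dots> = concat (map (\<lambda>_. [(g,h),(g',h)]) (filter (\<lambda>S. h \<in> set S) Ws))"
    by (rule concat_if_const)
  finally have T: "filter (\<lambda>z. z = (g,h) \<or> z = (g',h)) (tblk \<sigma> Ws) = \<dots>" .
  have ne: "U \<noteq> []" using assms(6) unfolding U_def by auto
  have lst: "last U = g'" using last_remdups[OF ne] assms(6) unfolding U_def by simp
  have inj: "inj_on (\<lambda>x. (x,h)) (set U)" by (auto simp: inj_on_def)
  show ?thesis
    unfolding filter_append X T nar_append
    using nar_pairs[of "(g,h)" "(g',h)" "filter (\<lambda>S. h \<in> set S) Ws"] assms(2) nar_map[OF inj] ne lst
    by (auto simp: U_def last_map filter_empty_conv)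
qed

lemma type2:
  assumes "g \<in> set u" "distinct \<sigma>" "g \<in> set \<sigma>" "filter (\<lambda>x. x = h \<or> x = h') \<pi> = [p,q]" "p \<noteq> q"
    "filter (\<lambda>x. x = h \<or> x = h') (concat Ws) \<noteq> []"
    "hd (filter (\<lambda>x. x = h \<or> x = h') (concat Ws)) = p"
  shows "no_adj_repeat (filter (\<lambda>z. z = (g,h) \<or> z = (g,h')) (blk u \<pi> @ tblk \<sigma> Ws))
     \<longleftrightarrow> no_adj_repeat (filter (\<lambda>x. x = h \<or> x = h') (concat Ws))"
proof -
  define V where "V = filter (\<lambda>x. x = h \<or> x = h') (concat Ws)"
  have "filter (\<lambda>z. z = (g,h) \<or> z = (g,h')) (blk u \<pi>) =
     concat (map (\<lambda>x. if x = g then [(g,p),(g,q)] else []) u)"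
    unfolding blk_t2 assms(4) by (simp only: list.map)
  also have "\<dots> = concat (map (\<lambda>_. [(g,p),(g,q)]) (filter (\<lambda>x. x = g) u))"
    by (rule concat_if_const)
  finally have X: "filter (\<lambda>z. z = (g,h) \<or> z = (g,h')) (blk u \<pi>) = \<dots>" .
  have T: "filter (\<lambda>z. z = (g,h) \<or> z = (g,h')) (tblk \<sigma> Ws) = map (Pair g) V"
    unfolding tblk_def filter_concat map_map comp_def V_def
    using assms(2,3) by (simp add: blk_t2d map_concat comp_def)
  have ne: "filter (\<lambda>x. x = g) u \<noteq> []" using assms(1) by (auto simp: filter_empty_conv)
  have inj: "inj_on (Pair g) (set V)" by (auto simp: inj_on_def)
  show ?thesis
    unfolding filter_append X T nar_append V_def[symmetric]
    using nar_pairs[of "(g,p)" "(g,q)" "filter (\<lambda>x. x = g) u"] assms(5,6,7) nar_map[OF inj] ne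
    by (auto simp: V_def hd_map)
qed


lemma s_vs_f:
  assumes "distinct S" "h \<noteq> h'"
  shows "(if h \<in> set S then [a] else []) @ (if h' \<in> set S then [b] else []) =
    (if filter (\<lambda>x. x = h \<or> x = h') S = [h',h] then [a,b]
     else map (\<lambda>x. if x = h then a else b) (filter (\<lambda>x. x = h \<or> x = h') S))"
proof -
  define L where "L = filter (\<lambda>x. x = h \<or> x = h') S"
  have d: "distinct L" "set L \<subseteq> {h,h'}" using assms(1) by (auto simp: L_def)
  have m1: "h \<in> set S \<longleftrightarrow> h \<in> set L" "h' \<in> set S \<longleftrightarrow> h' \<in> set L" by (auto simp: L_def)
  show ?thesis
    unfolding L_def[symmetric] m1
    using five_cases[OF d] assms(2) by auto
qed

lemma type3:
  assumes s1: "filter (\<lambda>x. x = g \<or> x = g') \<sigma> = [g,g']" and gg: "g \<noteq> g'" and hh: "h \<noteq> h'"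
    and dS: "\<forall>S\<in>set Ws. distinct S"
    and ru: "remdups (filter (\<lambda>x. x = g \<or> x = g') u) = [g,g']"
    and dp: "distinct \<pi>" and hp: "h \<in> set \<pi>" "h' \<in> set \<pi>"
    and wne: "filter (\<lambda>x. x = h \<or> x = h') w \<noteq> []"
    and hyp: "no_adj_repeat (filter (\<lambda>x. x = g \<or> x = g') u) \<Longrightarrow> no_adj_repeat (filter (\<lambda>x. x = h \<or> x = h') w) \<Longrightarrow>
       no_adj_repeat (filter (\<lambda>x. x = h \<or> x = h') (w @ concat Ws)) \<and>
       (hd (filter (\<lambda>x. x = h \<or> x = h') w) = h' \<or>
        (hd (filter (\<lambda>x. x = h \<or> x = h') w) = h \<and> (\<exists>S\<in>set Ws. filter (\<lambda>x. x = h \<or> x = h') S = [h',h])))"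
  shows "\<not> no_adj_repeat (filter (\<lambda>z. z = (g,h) \<or> z = (g',h')) (blk u \<pi> @ tblk \<sigma> (map (\<lambda>y. [y]) w @ Ws)))"
proof -
  define U where "U = filter (\<lambda>x. x = g \<or> x = g') u"
  define Wf where "Wf = filter (\<lambda>x. x = h \<or> x = h') w"
  define \<phi> where "\<phi> = (\<lambda>x. if x = g then (g,h) else (g',h'))"
  define \<psi> where "\<psi> = (\<lambda>x. if x = h then (g,h) else (g',h'))"
  define s where "s = (\<lambda>S. (if h \<in> set S then [(g,h)] else []) @ (if h' \<in> set S then [(g',h')] else []))"
  define f where "f = (\<lambda>S. map \<psi> (filter (\<lambda>x. x = h \<or> x = h') S))"
  have X: "filter (\<lambda>z. z = (g,h) \<or> z = (g',h')) (blk u \<pi>) = map \<phi> U"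
    using blk_t3[OF dp gg hp] by (simp add: U_def \<phi>_def)
  have Tg: "filter (\<lambda>z. z = (g,h) \<or> z = (g',h')) (tblk \<sigma> Vs) = concat (map s Vs)"
    if "\<forall>S\<in>set Vs. distinct S" for Vs
    unfolding tblk_def filter_concat map_map comp_def s_def
    using that by (intro arg_cong[where f=concat] map_cong) (auto simp: blk_t3d[OF _ gg s1])
  have sing: "concat (map s (map (\<lambda>y. [y]) w)) = map \<psi> Wf"
  proof -
    have "concat (map s (map (\<lambda>y. [y]) w)) = concat (map (\<lambda>y. if y = h \<or> y = h' then [\<psi> y] else []) w)"
      using hh by (intro arg_cong[where f=concat] map_cong) (auto simp: s_def \<psi>_def)
    then show ?thesis by (simp add: concat_if_single Wf_def)
  qed
  have T: "filter (\<lambda>z. z = (g,h) \<or> z = (g',h')) (tblk \<sigma> (map (\<lambda>y. [y]) w @ Ws)) = map \<psi> Wf @ concat (map s Ws)"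
  proof -
    have "\<forall>S\<in>set (map (\<lambda>y. [y]) w @ Ws). distinct S" using dS by auto
    from Tg[OF this] show ?thesis using sing by simp
  qed
  have injp: "inj_on \<phi> (set U)" using gg by (auto simp: inj_on_def \<phi>_def U_def)
  have injs: "inj_on \<psi> A" if "A \<subseteq> {h,h'}" for A using hh that by (auto simp: inj_on_def \<psi>_def)
  have Une: "U \<noteq> []" using ru unfolding U_def by auto
  have lastU: "last U = g'" using last_remdups[OF Une] ru unfolding U_def by simp
  have lastX: "last (map \<phi> U) = (g',h')" using Une lastU gg by (simp add: last_map \<phi>_def)
  have W: "filter (\<lambda>z. z = (g,h) \<or> z = (g',h')) (blk u \<pi> @ tblk \<sigma> (map (\<lambda>y. [y]) w @ Ws))
      = map \<phi> U @ (map \<psi> Wf @ concat (map s Ws))"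
    by (simp only: filter_append X T)
  show ?thesis
  proof (cases "no_adj_repeat U \<and> no_adj_repeat Wf")
    case False
    then show ?thesis unfolding W
      using nar_map[OF injp] nar_map[OF injs[of "set Wf"]] by (auto simp: nar_append Wf_def)
  next
    case True
    then have H: "no_adj_repeat (filter (\<lambda>x. x = h \<or> x = h') (w @ concat Ws))"
       "hd Wf = h' \<or> (hd Wf = h \<and> (\<exists>S\<in>set Ws. filter (\<lambda>x. x = h \<or> x = h') S = [h',h]))"
      using hyp unfolding U_def Wf_def by auto
    have wne': "Wf \<noteq> []" using wne by (simp add: Wf_def)
    show ?thesis
    proof (cases "hd Wf = h'")
      case True
      have "hd (map \<psi> Wf @ concat (map s Ws)) = (g',h')" using True wne' hh by (simp add: \<psi>_def hd_map)
      then show ?thesis unfolding W nar_append using lastX Une wne' by auto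
    next
      case False
      with H obtain S0 where S0: "S0 \<in> set Ws" "filter (\<lambda>x. x = h \<or> x = h') S0 = [h',h]" and hdW: "hd Wf = h" by auto
      have cf: "concat (map f Ws) = map \<psi> (filter (\<lambda>x. x = h \<or> x = h') (concat Ws))"
        by (simp add: f_def filter_concat map_concat comp_def)
      have nar1: "no_adj_repeat ((map \<phi> U @ map \<psi> Wf) @ concat (map f Ws))"
      proof -
        have e: "(map \<phi> U @ map \<psi> Wf) @ concat (map f Ws) = map \<phi> U @ map \<psi> (filter (\<lambda>x. x = h \<or> x = h') (w @ concat Ws))"
          by (simp add: cf Wf_def)
        have n2: "no_adj_repeat (map \<psi> (filter (\<lambda>x. x = h \<or> x = h') (w @ concat Ws)))"
          using H(1) nar_map[OF injs, of "filter (\<lambda>x. x = h \<or> x = h') (w @ concat Ws)"] by auto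
        have hd2: "hd (map \<psi> (filter (\<lambda>x. x = h \<or> x = h') (w @ concat Ws))) = (g,h)"
          using hdW wne' by (simp add: Wf_def hd_map \<psi>_def)
        show ?thesis unfolding e nar_append using n2 hd2 lastX nar_map[OF injp] True gg
          by (auto simp: U_def)
      qed
      have "\<not> no_adj_repeat ((map \<phi> U @ map \<psi> Wf) @ concat (map s Ws))"
      proof (rule break[where a="(g,h)" and b="(g',h')" and f=f])
        show "map \<phi> U @ map \<psi> Wf \<noteq> []" using Une by simp
        show "set (map \<phi> U @ map \<psi> Wf) \<subseteq> {(g,h),(g',h')}" by (auto simp: \<phi>_def \<psi>_def)
        show "(g,h) \<noteq> (g',h')" using gg by simp
        show "no_adj_repeat ((map \<phi> U @ map \<psi> Wf) @ concat (map f Ws))" by (rule nar1)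
        show "\<exists>S\<in>set Ws. f S = [(g',h'),(g,h)]"
        proof
          show "f S0 = [(g',h'),(g,h)]" using S0(2) hh by (simp add: f_def \<psi>_def)
        qed (rule S0(1))
        show "\<forall>S\<in>set Ws. set (f S) \<subseteq> {(g,h),(g',h')}" by (auto simp: f_def \<psi>_def)
        show "\<forall>S\<in>set Ws. f S \<noteq> [(g',h'),(g,h)] \<longrightarrow> s S = f S"
        proof (intro ballI impI)
          fix S assume S: "S \<in> set Ws" "f S \<noteq> [(g',h'),(g,h)]"
          have "filter (\<lambda>x. x = h \<or> x = h') S \<noteq> [h',h]" using S(2) hh by (auto simp: f_def \<psi>_def)
          then show "s S = f S" using s_vs_f[of S h h' "(g,h)" "(g',h')"] dS S(1) hh
            by (simp add: s_def f_def \<psi>_def)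
        qed
        show "\<forall>S\<in>set Ws. f S = [(g',h'),(g,h)] \<longrightarrow> s S = [(g,h),(g',h')]"
        proof (intro ballI impI)
          fix S assume S: "S \<in> set Ws" "f S = [(g',h'),(g,h)]"
          have "filter (\<lambda>x. x = h \<or> x = h') S = [h',h]"
          proof -
            define L where "L = filter (\<lambda>x. x = h \<or> x = h') S"
            have "set L \<subseteq> {h,h'}" "distinct L" using dS S(1) by (auto simp: L_def)
            then show ?thesis using five_cases[of L h h'] S(2) hh gg
              by (auto simp: f_def \<psi>_def L_def[symmetric])
          qed
          then show "s S = [(g,h),(g',h')]" using s_vs_f[of S h h' "(g,h)" "(g',h')"] dS S(1) hh
            by (simp add: s_def)
        qed
      qed
      then show ?thesis unfolding W by simp
    qed
  qed
qed


definition rot :: "'b list \<Rightarrow> nat \<Rightarrow> 'b list" where "rot t r = drop r t @ take r t"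
definition piece :: "'b list \<Rightarrow> nat \<Rightarrow> nat \<Rightarrow> 'b list list" where
  "piece t k r = (if r = k then [] else [rot t r]) @ [[t ! r]]"
definition wins :: "'b list \<Rightarrow> nat \<Rightarrow> 'b list list" where
  "wins t k = concat (map (piece t k) [0..<length t - 1]) @ (if length t - 1 = k then [] else [rot t (length t - 1)])"

lemma concat_rep_snoc: "concat (replicate c xs) @ xs = concat (replicate (Suc c) xs)"
  by (induction c) auto

lemma wins_inv: "r \<le> length t \<Longrightarrow> concat (concat (map (piece t k) [0..<r])) =
   concat (replicate (r - (if k < r then 1 else 0)) t) @ take r t"
proof (induction r)
  case 0 then show ?case by simp
next
  case (Suc r)
  then have IH: "concat (concat (map (piece t k) [0..<r])) = concat (replicate (r - (if k < r then 1 else 0)) t) @ take r t"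
    and ol: "r < length t" by auto
  have tk: "take r t @ [t ! r] = take (Suc r) t" using ol by (simp add: take_Suc_conv_app_nth)
  have sp: "concat (concat (map (piece t k) [0..<Suc r])) = concat (concat (map (piece t k) [0..<r])) @ concat (piece t k r)"
    by simp
  show ?case
  proof (cases "r = k")
    case True
    have "concat (piece t k r) = [t ! r]" using True by (simp add: piece_def)
    then show ?thesis using IH tk True sp by simp
  next
    case False
    have pc: "concat (piece t k r) = drop r t @ take r t @ [t ! r]" using False by (simp add: piece_def rot_def)
    have "concat (concat (map (piece t k) [0..<Suc r])) =
       concat (replicate (r - (if k < r then 1 else 0)) t) @ (take r t @ drop r t) @ (take r t @ [t ! r])"
      unfolding sp IH pc by simp
    also have "\<dots> = (concat (replicate (r - (if k < r then 1 else 0)) t) @ t) @ take (Suc r) t"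
      using tk by simp
    also have "\<dots> = concat (replicate (Suc (r - (if k < r then 1 else 0))) t) @ take (Suc r) t"
      by (simp only: concat_rep_snoc)
    also have "Suc (r - (if k < r then 1 else 0)) = Suc r - (if k < Suc r then 1 else 0)"
      using False by auto
    finally show ?thesis .
  qed
qed

lemma wins_concat:
  assumes "length t \<ge> 1" "k < length t"
  shows "concat (wins t k) @ [t ! (length t - 1)] = concat (replicate (length t) t)"
proof -
  let ?m = "length t"
  have I: "concat (concat (map (piece t k) [0..<?m - 1])) =
     concat (replicate ((?m - 1) - (if k < ?m - 1 then 1 else 0)) t) @ take (?m - 1) t"
    by (rule wins_inv) simp
  have tk: "take (?m - 1) t @ [t ! (?m - 1)] = t"
    using assms(1) take_Suc_conv_app_nth[of "?m - 1" t] by simp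
  show ?thesis
  proof (cases "?m - 1 = k")
    case True
    then have "concat (wins t k) @ [t ! (?m - 1)] = concat (replicate (?m - 1) t) @ t"
      using I tk by (simp add: wins_def)
    also have "\<dots> = concat (replicate (Suc (?m - 1)) t)" by (simp only: concat_rep_snoc)
    also have "Suc (?m - 1) = ?m" using assms(1) by simp
    finally show ?thesis .
  next
    case False
    then have kl: "k < ?m - 1" using assms by simp
    have "concat (wins t k) @ [t ! (?m - 1)] =
       concat (replicate (?m - 2) t) @ (take (?m - 1) t @ drop (?m - 1) t) @ (take (?m - 1) t @ [t ! (?m - 1)])"
      using I False kl by (simp add: wins_def rot_def numeral_2_eq_2)
    also have "\<dots> = (concat (replicate (?m - 2) t) @ t) @ t" using tk by simp
    also have "\<dots> = concat (replicate (Suc (Suc (?m - 2))) t)" by (simp only: concat_rep_snoc)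
    also have "Suc (Suc (?m - 2)) = ?m" using kl by simp
    finally show ?thesis .
  qed
qed


lemma filt_upt2: "i < j \<Longrightarrow> filter (\<lambda>y. y = i \<or> y = j) [a..<b] =
   (if a \<le> i \<and> i < b then [i] else []) @ (if a \<le> j \<and> j < b then [j] else [])"
  by (induction b) auto

lemma filt_map_nth:
  assumes "distinct t" "i < length t" "j < length t" "\<forall>y\<in>set L. y < length t"
  shows "filter (\<lambda>x. x = t ! i \<or> x = t ! j) (map (nth t) L) = map (nth t) (filter (\<lambda>y. y = i \<or> y = j) L)"
proof -
  have "filter (\<lambda>x. x = t ! i \<or> x = t ! j) (map (nth t) L) = map (nth t) (filter ((\<lambda>x. x = t ! i \<or> x = t ! j) \<circ> nth t) L)"
    by (rule filter_map)
  also have "filter ((\<lambda>x. x = t ! i \<or> x = t ! j) \<circ> nth t) L = filter (\<lambda>y. y = i \<or> y = j) L"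
    using assms by (intro filter_cong) (auto simp: nth_eq_iff_index_eq)
  finally show ?thesis .
qed

lemma rot_filt:
  assumes "distinct t" "i < j" "j < length t" "r \<le> length t"
  shows "filter (\<lambda>x. x = t ! i \<or> x = t ! j) (rot t r) = (if i < r \<and> r \<le> j then [t ! j, t ! i] else [t ! i, t ! j])"
proof -
  let ?m = "length t"
  have tk: "take r t = map (nth t) [0..<r]"
    using assms(4) by (metis map_nth take_map take_upt add_0)
  have dr: "drop r t = map (nth t) [r..<?m]"
    by (metis map_nth drop_map drop_upt add_0)
  have "filter (\<lambda>x. x = t ! i \<or> x = t ! j) (rot t r) =
     map (nth t) (filter (\<lambda>y. y = i \<or> y = j) [r..<?m]) @ map (nth t) (filter (\<lambda>y. y = i \<or> y = j) [0..<r])"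
    unfolding rot_def filter_append tk dr using assms
    by (simp add: filt_map_nth)
  then show ?thesis using assms by (auto simp: filt_upt2)
qed

lemma distinct_rot: "distinct t \<Longrightarrow> distinct (rot t r)"
  unfolding rot_def by (metis distinct_append append_take_drop_id inf_commute)

lemma set_rot: "set (rot t r) = set t"
  unfolding rot_def by (metis append_take_drop_id set_append sup_commute)


lemma wins_elems:
  assumes "S \<in> set (wins t k)" "t \<noteq> []"
  shows "\<exists>r < length t. S = rot t r \<or> S = [t ! r]"
proof -
  from assms(1) consider (a) r where "r < length t - 1" "S \<in> set (piece t k r)"
    | (b) "S = rot t (length t - 1)"
    unfolding wins_def by (auto split: if_splits)
  then show ?thesis
  proof cases
    case a
    then have "r < length t" by simp
    with a show ?thesis by (auto simp: piece_def split: if_splits)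
  next
    case b
    have "length t - 1 < length t" using assms(2) by simp
    then show ?thesis using b by blast
  qed
qed

lemma wins_prop:
  assumes "S \<in> set (wins t k)" "distinct t" "t \<noteq> []"
  shows "distinct S \<and> set S \<subseteq> set t"
  using wins_elems[OF assms(1,3)] assms(2) by (auto simp: distinct_rot set_rot)

lemma rot_in_wins:
  assumes "r < length t" "r \<noteq> k"
  shows "rot t r \<in> set (wins t k)"
proof (cases "r = length t - 1")
  case True then show ?thesis using assms by (auto simp: wins_def)
next
  case False
  then have "r < length t - 1" using assms by simp
  then have "rot t r \<in> set (piece t k r)" "r \<in> set [0..<length t - 1]" using assms by (auto simp: piece_def)
  then show ?thesis unfolding wins_def by auto
qed



lemma rep_pair: "e \<noteq> l \<Longrightarrow> no_adj_repeat (concat (replicate c [e,l])) \<and> (c > 0 \<longrightarrow> hd (concat (replicate c [e,l])) = e)"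
  by (induction c) (auto simp: nar_Cons)

lemma filter_rep: "filter P (concat (replicate c t)) = concat (replicate c (filter P t))"
  by (induction c) auto

lemma wins_alt:
  assumes "distinct t" "t \<noteq> []" "k < length t" "filter P t = [e,l]" "e \<noteq> l"
  shows "no_adj_repeat (filter P (concat (wins t k))) \<and>
     (filter P (concat (wins t k)) \<noteq> [] \<longrightarrow> hd (filter P (concat (wins t k))) = e)"
proof -
  have c: "concat (wins t k) @ [t ! (length t - 1)] = concat (replicate (length t) t)"
    using assms by (intro wins_concat) auto
  have "filter P (concat (wins t k) @ [t ! (length t - 1)]) = filter P (concat (replicate (length t) t))"
    by (simp only: c)
  then have F: "filter P (concat (wins t k)) @ filter P [t ! (length t - 1)] = concat (replicate (length t) [e,l])"
    by (simp only: filter_append filter_rep assms(4))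
  have lp: "length t > 0" using assms by simp
  have R: "no_adj_repeat (concat (replicate (length t) [e,l]))" "hd (concat (replicate (length t) [e,l])) = e"
    using rep_pair[OF assms(5), of "length t"] lp by auto
  show ?thesis
  proof
    show "no_adj_repeat (filter P (concat (wins t k)))" using R(1) unfolding F[symmetric] nar_append by blast
    show "filter P (concat (wins t k)) \<noteq> [] \<longrightarrow> hd (filter P (concat (wins t k))) = e"
      using R(2) unfolding F[symmetric] by auto
  qed
qed

definition cnt :: "'b list \<Rightarrow> 'b \<Rightarrow> nat" where "cnt xs a = length (filter (\<lambda>z. z = a) xs)"

lemma alt_cnt: "no_adj_repeat (x # xs) \<Longrightarrow> set (x # xs) \<subseteq> {a,b} \<Longrightarrow> a \<noteq> b \<Longrightarrow>
  int (cnt (x # xs) a) - int (cnt (x # xs) b) = (if last (x # xs) = x then (if x = a then 1 else -1) else 0)"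
proof (induction xs arbitrary: x)
  case Nil then show ?case by (auto simp: cnt_def)
next
  case (Cons y ys)
  have IH: "int (cnt (y # ys) a) - int (cnt (y # ys) b) = (if last (y # ys) = y then (if y = a then 1 else -1) else 0)"
    using Cons by auto
  have xy: "x \<noteq> y" using Cons.prems by simp
  have "int (cnt (x # y # ys) a) - int (cnt (x # y # ys) b) = (if x = a then 1 else -1) + (int (cnt (y # ys) a) - int (cnt (y # ys) b))"
    using Cons.prems by (auto simp: cnt_def)
  moreover have "last (y # ys) \<in> {a,b}" using Cons.prems(2) by (metis last_in_set list.distinct(1) set_subset_Cons subsetD)
  ultimately show ?case using IH xy Cons.prems(2,3) by auto
qed

lemma alt_cnt_eq:
  assumes "no_adj_repeat L" "set L \<subseteq> {a,b}" "a \<noteq> b" "L \<noteq> []"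
  shows "cnt L a = cnt L b \<longleftrightarrow> last L \<noteq> hd L"
proof -
  obtain x xs where L: "L = x # xs" using assms(4) by (cases L) auto
  have "x \<in> {a,b}" using assms(2) L by auto
  then show ?thesis using alt_cnt[of x xs a b] assms L by (auto split: if_splits)
qed

lemma cnt_filter: "P a \<Longrightarrow> cnt (filter P xs) a = cnt xs a"
  unfolding cnt_def by (induction xs) auto

definition kprop :: "'b list \<Rightarrow> 'b list \<Rightarrow> nat \<Rightarrow> bool" where
  "kprop w t k \<longleftrightarrow> k < length t \<and>
    ((k = 0 \<and> \<not> (alternate w (t ! 0) (t ! (length t - 1)) \<and> cnt w (t ! 0) \<noteq> cnt w (t ! (length t - 1)))) \<or>
     (0 < k \<and> \<not> (alternate w (t ! (k - 1)) (t ! k) \<and> cnt w (t ! (k - 1)) = cnt w (t ! k))))"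

lemma kprop_ex: assumes "t \<noteq> []" shows "\<exists>k. kprop w t k"
proof (cases "alternate w (t ! 0) (t ! (length t - 1)) \<and> cnt w (t ! 0) \<noteq> cnt w (t ! (length t - 1))")
  case False
  have "kprop w t 0" unfolding kprop_def using False assms by simp
  then show ?thesis by blast
next
  case A: True
  show ?thesis
  proof (cases "\<exists>k. 0 < k \<and> k < length t \<and> \<not> (alternate w (t ! (k - 1)) (t ! k) \<and> cnt w (t ! (k - 1)) = cnt w (t ! k))")
    case True
    then obtain k where "0 < k" "k < length t" "\<not> (alternate w (t ! (k - 1)) (t ! k) \<and> cnt w (t ! (k - 1)) = cnt w (t ! k))"
      by blast
    then have "kprop w t k" unfolding kprop_def by simp
    then show ?thesis by blast
  next
    case False
    then have B: "\<And>k. 0 < k \<Longrightarrow> k < length t \<Longrightarrow> cnt w (t ! (k - 1)) = cnt w (t ! k)" by blast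
    have C: "k < length t \<Longrightarrow> cnt w (t ! k) = cnt w (t ! 0)" for k
    proof (induction k)
      case (Suc k)
      then have "cnt w (t ! k) = cnt w (t ! 0)" by simp
      moreover have "cnt w (t ! (Suc k - 1)) = cnt w (t ! Suc k)" using B[of "Suc k"] Suc.prems by blast
      ultimately show ?case by simp
    qed simp
    have "length t - 1 < length t" using assms by simp
    from C[OF this] A show ?thesis by simp
  qed
qed

lemma kprop_win:
  assumes kp: "kprop w t k" and ij: "i < j" "j < length t" and al: "alternate w (t ! i) (t ! j)"
  shows "\<exists>r < length t. r \<noteq> k \<and> (if cnt w (t ! i) = cnt w (t ! j) then i < r \<and> r \<le> j else (r \<le> i \<or> j < r))"
proof -
  have kl: "k < length t" using kp unfolding kprop_def by blast
  have K: "(k = 0 \<and> \<not> (alternate w (t ! 0) (t ! (length t - 1)) \<and> cnt w (t ! 0) \<noteq> cnt w (t ! (length t - 1)))) \<or>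
     (0 < k \<and> \<not> (alternate w (t ! (k - 1)) (t ! k) \<and> cnt w (t ! (k - 1)) = cnt w (t ! k)))"
    using kp unfolding kprop_def by blast
  show ?thesis
  proof (cases "cnt w (t ! i) = cnt w (t ! j)")
    case eq: True
    show ?thesis
    proof (cases "j = k")
      case False
      show ?thesis using False ij eq by (intro exI[of _ j]) simp
    next
      case jk: True
      show ?thesis
      proof (cases "i < k - 1")
        case True
        show ?thesis using True jk ij eq by (intro exI[of _ "k - 1"]) auto
      next
        case False
        then have "i = k - 1" "0 < k" using jk ij by auto
        then have "\<not> (alternate w (t ! (k - 1)) (t ! k) \<and> cnt w (t ! (k - 1)) = cnt w (t ! k))" using K by auto
        then show ?thesis using al eq jk \<open>i = k - 1\<close> by simp
      qed
    qed
  next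
    case neq: False
    show ?thesis
    proof (cases "k = 0")
      case k0: True
      show ?thesis
      proof (cases "1 \<le> i")
        case True
        show ?thesis using True k0 ij neq by (intro exI[of _ i]) simp
      next
        case i0: False
        show ?thesis
        proof (cases "j < length t - 1")
          case True
          show ?thesis using True k0 ij neq by (intro exI[of _ "length t - 1"]) simp
        next
          case jm: False
          have "i = 0" "j = length t - 1" using i0 jm ij by auto
          then have "\<not> (alternate w (t ! 0) (t ! (length t - 1)) \<and> cnt w (t ! 0) \<noteq> cnt w (t ! (length t - 1)))"
            using K k0 by auto
          then show ?thesis using al neq \<open>i = 0\<close> \<open>j = length t - 1\<close> by simp
        qed
      qed
    next
      case False
      show ?thesis using False ij neq by (intro exI[of _ 0]) auto
    qed
  qed
qed


lemma G_lemma: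
  assumes "g \<in> set u" "g' \<in> set u" "g \<noteq> g'"
  shows "remdups (filter (\<lambda>x. x = g \<or> x = g') u) = filter (\<lambda>x. x = g \<or> x = g') (remdups u)"
    "filter (\<lambda>x. x = g \<or> x = g') (remdups u) = [g,g'] \<or> filter (\<lambda>x. x = g \<or> x = g') (remdups u) = [g',g]"
proof -
  show "remdups (filter (\<lambda>x. x = g \<or> x = g') u) = filter (\<lambda>x. x = g \<or> x = g') (remdups u)"
    by (rule remdups_filter)
  have "distinct (filter (\<lambda>x. x = g \<or> x = g') (remdups u))" by simp
  moreover have "set (filter (\<lambda>x. x = g \<or> x = g') (remdups u)) = {g,g'}" using assms by auto
  ultimately show "filter (\<lambda>x. x = g \<or> x = g') (remdups u) = [g,g'] \<or> filter (\<lambda>x. x = g \<or> x = g') (remdups u) = [g',g]"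
    by (rule two_cases[OF _ _ assms(3)])
qed

lemma H_lemma:
  assumes rep: "represents VH EH w" and hh: "h \<in> VH" "h' \<in> VH" "h \<noteq> h'"
    and kp: "kprop w (remdups w) k"
  shows "filter (\<lambda>x. x = h \<or> x = h') w \<noteq> []"
    "\<exists>q. filter (\<lambda>x. x = h \<or> x = h') (rev (remdups (rev w))) = [hd (filter (\<lambda>x. x = h \<or> x = h') w), q]
         \<and> q \<noteq> hd (filter (\<lambda>x. x = h \<or> x = h') w)"
    "EH h h' \<longleftrightarrow> no_adj_repeat (filter (\<lambda>x. x = h \<or> x = h') w)"
    "EH h h' \<Longrightarrow> no_adj_repeat (filter (\<lambda>x. x = h \<or> x = h') (w @ concat (wins (remdups w) k)))"
    "EH h h' \<Longrightarrow> \<exists>S\<in>set (wins (remdups w) k). \<exists>x. filter (\<lambda>x. x = h \<or> x = h') S = [x, hd (filter (\<lambda>x. x = h \<or> x = h') w)]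
        \<and> x \<noteq> hd (filter (\<lambda>x. x = h \<or> x = h') w)"
proof -
  define P where "P = (\<lambda>x. x = h \<or> x = h')"
  define Wf where "Wf = filter P w"
  define t where "t = remdups w"
  have sw: "set w = VH" using rep unfolding represents_def by (rule conjunct1)
  have rE: "\<forall>x\<in>VH. \<forall>y\<in>VH. x \<noteq> y \<longrightarrow> (EH x y \<longleftrightarrow> alternate w x y)"
    using rep unfolding represents_def by (rule conjunct2)
  have Wne: "Wf \<noteq> []" using hh sw unfolding Wf_def P_def by (auto simp: filter_empty_conv)
  then show "filter (\<lambda>x. x = h \<or> x = h') w \<noteq> []" unfolding Wf_def P_def .
  have setW: "set Wf = {h,h'}" using hh sw unfolding Wf_def P_def by auto
  show E: "EH h h' \<longleftrightarrow> no_adj_repeat (filter (\<lambda>x. x = h \<or> x = h') w)"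
    using rE hh unfolding alternate_def by simp
  \<comment> \<open>first-occurrence order\<close>
  have pf: "filter P (rev (remdups (rev w))) = rev (remdups (rev Wf))"
    unfolding Wf_def by (simp add: remdups_filter rev_filter)
  have "distinct (rev (remdups (rev Wf)))" "set (rev (remdups (rev Wf))) = {h,h'}" using setW by auto
  then have pc: "rev (remdups (rev Wf)) = [h,h'] \<or> rev (remdups (rev Wf)) = [h',h]" by (rule two_cases[OF _ _ hh(3)])
  have hdp: "hd (rev (remdups (rev Wf))) = hd Wf"
    using Wne by (simp add: hd_rev last_remdups last_rev)
  show "\<exists>q. filter (\<lambda>x. x = h \<or> x = h') (rev (remdups (rev w))) = [hd (filter (\<lambda>x. x = h \<or> x = h') w), q]
         \<and> q \<noteq> hd (filter (\<lambda>x. x = h \<or> x = h') w)"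
    using pf pc hdp hh(3) unfolding P_def Wf_def by auto
  \<comment> \<open>last-occurrence order\<close>
  have tf: "filter P t = remdups Wf" unfolding t_def Wf_def by (simp add: remdups_filter)
  have "distinct (remdups Wf)" "set (remdups Wf) = {h,h'}" using setW by auto
  then have "remdups Wf = [h,h'] \<or> remdups Wf = [h',h]" by (rule two_cases[OF _ _ hh(3)])
  then obtain e l where el: "filter P t = [e,l]" "e \<noteq> l" "{e,l} = {h,h'}" using tf hh(3) by auto
  have lastW: "last Wf = l" using last_remdups[OF Wne] tf el(1) by (metis last_ConsL last_ConsR list.distinct(1))
  have tne: "t \<noteq> []" using Wne unfolding t_def Wf_def by auto
  have dt: "distinct t" unfolding t_def by simp
  have kl: "k < length t" using kp unfolding kprop_def t_def by blast
  have WA: "no_adj_repeat (filter P (concat (wins t k))) \<and>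
     (filter P (concat (wins t k)) \<noteq> [] \<longrightarrow> hd (filter P (concat (wins t k))) = e)"
    by (rule wins_alt[OF dt tne kl el(1,2)])
  show "no_adj_repeat (filter (\<lambda>x. x = h \<or> x = h') (w @ concat (wins (remdups w) k)))" if "EH h h'"
  proof -
    have nW: "no_adj_repeat Wf" using E that unfolding Wf_def P_def by simp
    have "no_adj_repeat (Wf @ filter P (concat (wins t k)))"
      unfolding nar_append using nW WA lastW el(2) Wne by auto
    then show ?thesis unfolding Wf_def P_def t_def by simp
  qed
  show "\<exists>S\<in>set (wins (remdups w) k). \<exists>x. filter (\<lambda>x. x = h \<or> x = h') S = [x, hd (filter (\<lambda>x. x = h \<or> x = h') w)]
        \<and> x \<noteq> hd (filter (\<lambda>x. x = h \<or> x = h') w)" if "EH h h'"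
  proof -
    have nW: "no_adj_repeat Wf" using E that unfolding Wf_def P_def by simp
    have "set (filter P t) \<subseteq> set t" by auto
    then have "e \<in> set t" "l \<in> set t" using el(1) by auto
    then obtain i j where ij: "i < length t" "j < length t" "t ! i = e" "t ! j = l"
      by (auto simp: in_set_conv_nth)
    have el3: "(e = h \<and> l = h') \<or> (e = h' \<and> l = h)" using el(3) by (simp add: doubleton_eq_iff)
    have Peq: "P = (\<lambda>x. x = t ! i \<or> x = t ! j)" unfolding P_def ij(3,4) fun_eq_iff using el3 by blast
    have ilj: "i < j"
    proof (rule ccontr)
      assume "\<not> i < j"
      moreover have "i \<noteq> j" using ij el(2) by auto
      ultimately have "j < i" by simp
      then have "filter (\<lambda>x. x = t ! j \<or> x = t ! i) (rot t 0) = [t ! j, t ! i]"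
        using rot_filt[OF dt, of j i 0] ij by simp
      moreover have "rot t 0 = t" by (simp add: rot_def)
      moreover have "filter (\<lambda>x. x = t ! j \<or> x = t ! i) t = filter P t" unfolding Peq by (rule filter_cong) auto
      ultimately show False using el(1,2) ij by simp
    qed
    have altw: "alternate w (t ! i) (t ! j)"
    proof -
      have "filter (\<lambda>z. z = t ! i \<or> z = t ! j) w = Wf" unfolding Wf_def Peq ..
      then show ?thesis using nW unfolding alternate_def by simp
    qed
    obtain r where r: "r < length t" "r \<noteq> k"
      "if cnt w (t ! i) = cnt w (t ! j) then i < r \<and> r \<le> j else (r \<le> i \<or> j < r)"
      using kprop_win[OF kp[folded t_def] ilj ij(2) altw] by blast
    have Sin: "rot t r \<in> set (wins t k)" using rot_in_wins r by blast
    have Sf: "filter P (rot t r) = (if i < r \<and> r \<le> j then [t ! j, t ! i] else [t ! i, t ! j])"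
      unfolding Peq using rot_filt[OF dt ilj ij(2)] r(1) by simp
    have cw: "cnt w (t ! i) = cnt w (t ! j) \<longleftrightarrow> last Wf \<noteq> hd Wf"
    proof -
      have "set Wf \<subseteq> {e,l}" using setW el(3) by simp
      from alt_cnt_eq[OF nW this el(2) Wne]
      have "cnt Wf e = cnt Wf l \<longleftrightarrow> last Wf \<noteq> hd Wf" .
      moreover have "cnt Wf e = cnt w e" "cnt Wf l = cnt w l" unfolding Wf_def P_def
        using el(3) by (auto intro!: cnt_filter)
      ultimately show ?thesis using ij by simp
    qed
    have hdW: "hd Wf \<in> {e,l}" using Wne setW el(3) by (metis hd_in_set)
    show ?thesis
    proof (cases "cnt w (t ! i) = cnt w (t ! j)")
      case True
      then have "hd Wf = e" using cw lastW hdW by auto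
      moreover have "filter P (rot t r) = [l, e]" using Sf r(3) True ij by simp
      ultimately show ?thesis using Sin el(2) unfolding P_def Wf_def t_def by auto
    next
      case False
      then have "hd Wf = l" using cw lastW by auto
      moreover have "filter P (rot t r) = [e, l]" using Sf r(3) False ij by auto
      ultimately show ?thesis using Sin el(2) unfolding P_def Wf_def t_def by auto
    qed
  qed
qed


lemma filt_comm: "filter (\<lambda>z. z = a \<or> z = b) xs = filter (\<lambda>z. z = b \<or> z = a) xs"
  by (rule filter_cong) auto

lemma H_hyp:
  assumes rep: "represents VH EH w" and hh: "h \<in> VH" "h' \<in> VH" "h \<noteq> h'"
    and kp: "kprop w (remdups w) k"
    and nW: "no_adj_repeat (filter (\<lambda>x. x = h \<or> x = h') w)"
  shows "no_adj_repeat (filter (\<lambda>x. x = h \<or> x = h') (w @ concat (wins (remdups w) k))) \<and>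
       (hd (filter (\<lambda>x. x = h \<or> x = h') w) = h' \<or>
        (hd (filter (\<lambda>x. x = h \<or> x = h') w) = h \<and> (\<exists>S\<in>set (wins (remdups w) k). filter (\<lambda>x. x = h \<or> x = h') S = [h',h])))"
proof -
  note H = H_lemma[OF rep hh kp]
  have E: "EH h h'" using H(3) nW by simp
  obtain S x where S: "S \<in> set (wins (remdups w) k)" "filter (\<lambda>x. x = h \<or> x = h') S = [x, hd (filter (\<lambda>x. x = h \<or> x = h') w)]"
    "x \<noteq> hd (filter (\<lambda>x. x = h \<or> x = h') w)"
    using H(5)[OF E] by blast
  have "hd (filter (\<lambda>x. x = h \<or> x = h') w) \<in> set (filter (\<lambda>x. x = h \<or> x = h') w)"
    by (rule hd_in_set[OF H(1)])
  then have hdin: "hd (filter (\<lambda>x. x = h \<or> x = h') w) \<in> {h,h'}" by simp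
  have "x \<in> set (filter (\<lambda>x. x = h \<or> x = h') S)" using S(2) by simp
  then have xin: "x \<in> {h,h'}" by simp
  show ?thesis
  proof (cases "hd (filter (\<lambda>x. x = h \<or> x = h') w) = h'")
    case True then show ?thesis using H(4)[OF E] by simp
  next
    case False
    then have "hd (filter (\<lambda>x. x = h \<or> x = h') w) = h" using hdin by auto
    moreover then have "x = h'" using xin S(3) by auto
    ultimately show ?thesis using H(4)[OF E] S by auto
  qed
qed

theorem mainTheorem7:
  fixes VG :: "'a set" and EG :: "'a \<Rightarrow> 'a \<Rightarrow> bool"
    and VH :: "'b set" and EH :: "'b \<Rightarrow> 'b \<Rightarrow> bool"
  assumes "simple_graph VG EG" and "simple_graph VH EH"
    and "VG \<noteq> {}" and "VH \<noteq> {}"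
    and "word_representable VG EG" and "word_representable VH EH"
    and "card VG \<ge> card VH"
  shows "min_rep_length (VG \<times> VH) (cart_edge EG EH)
           \<le> card VH * min_rep_length VG EG + card VG * min_rep_length VH EH
              + (card VH ^ 2 - 1) * card VG"
proof -
  obtain u where u: "represents VG EG u" "length u = min_rep_length VG EG"
  proof -
    have ex: "\<exists>n. \<exists>w. represents VG EG w \<and> length w = n" using assms(5) unfolding word_representable_def by blast
    from LeastI_ex[OF ex] show ?thesis using that unfolding min_rep_length_def by blast
  qed
  obtain w where w: "represents VH EH w" "length w = min_rep_length VH EH"
  proof -
    have ex: "\<exists>n. \<exists>w'. represents VH EH w' \<and> length w' = n" using assms(6) unfolding word_representable_def by blast
    from LeastI_ex[OF ex] show ?thesis using that unfolding min_rep_length_def by blast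
  qed
  define \<sigma> where "\<sigma> = remdups u"
  define \<pi> where "\<pi> = rev (remdups (rev w))"
  define t where "t = remdups w"
  have su: "set u = VG" using u(1) unfolding represents_def by (rule conjunct1)
  have sw: "set w = VH" using w(1) unfolding represents_def by (rule conjunct1)
  have rG: "\<forall>x\<in>VG. \<forall>y\<in>VG. x \<noteq> y \<longrightarrow> (EG x y \<longleftrightarrow> alternate u x y)"
    using u(1) unfolding represents_def by (rule conjunct2)
  have irrG: "\<And>x. \<not> EG x x" and symG: "\<And>x y. EG x y \<Longrightarrow> EG y x"
    using assms(1) unfolding simple_graph_def by blast+
  have irrH: "\<And>x. \<not> EH x x"
    using assms(2) unfolding simple_graph_def by blast
  have finH: "finite VH" using assms(2) unfolding simple_graph_def by blast
  have tne: "t \<noteq> []" using assms(4) sw unfolding t_def by auto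
  obtain k where kp: "kprop w t k" using kprop_ex[OF tne] by blast
  define Ws where "Ws = wins t k"
  define Ws' where "Ws' = map (\<lambda>y. [y]) w @ Ws"
  define W where "W = blk u \<pi> @ tblk \<sigma> Ws'"
  have dt: "distinct t" unfolding t_def by simp
  have dWs: "\<forall>S\<in>set Ws. distinct S \<and> set S \<subseteq> VH"
    using wins_prop[OF _ dt tne] sw unfolding Ws_def t_def by auto
  have dWs': "\<forall>S\<in>set Ws'. distinct S" using dWs unfolding Ws'_def by auto
  have cWs': "concat Ws' = w @ concat Ws" unfolding Ws'_def by (induction w) auto
  have dp: "distinct \<pi>" unfolding \<pi>_def by simp
  have sp: "set \<pi> = VH" unfolding \<pi>_def using sw by simp
  have ds: "distinct \<sigma>" unfolding \<sigma>_def by simp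
  have ss: "set \<sigma> = VG" unfolding \<sigma>_def using su by simp
  have kl: "k < length t" using kp unfolding kprop_def by blast
  have rep: "represents (VG \<times> VH) (cart_edge EG EH) W"
    unfolding represents_def
  proof (intro conjI)
    show "set W = VG \<times> VH"
    proof
      show "set W \<subseteq> VG \<times> VH" unfolding W_def set_append set_blk set_tblk Ws'_def
        using su sp ss sw dWs by auto
      show "VG \<times> VH \<subseteq> set W" unfolding W_def set_append set_blk using su sp by auto
    qed
    show "\<forall>x\<in>VG \<times> VH. \<forall>y\<in>VG \<times> VH. x \<noteq> y \<longrightarrow> cart_edge EG EH x y = alternate W x y"
    proof (intro ballI impI)
      fix x y assume xy: "x \<in> VG \<times> VH" "y \<in> VG \<times> VH" "x \<noteq> y"
      obtain g h where x: "x = (g,h)" by (cases x)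
      obtain g' h' where y: "y = (g',h')" by (cases y)
      have gin: "g \<in> VG" "g' \<in> VG" "h \<in> VH" "h' \<in> VH" using xy x y by auto
      note HL = H_lemma[OF w(1) gin(3,4) _ kp[unfolded t_def]]
      show "cart_edge EG EH x y = alternate W x y"
      proof (cases "g = g'")
        case gg: True
        then have hh: "h \<noteq> h'" using xy x y by simp
        have ce: "cart_edge EG EH x y \<longleftrightarrow> EH h h'" unfolding x y cart_edge_def using gg irrG by simp
        define Wf where "Wf = filter (\<lambda>x. x = h \<or> x = h') w"
        obtain q where q: "filter (\<lambda>x. x = h \<or> x = h') \<pi> = [hd Wf, q]" "q \<noteq> hd Wf"
          using HL(2)[OF hh] unfolding \<pi>_def Wf_def by blast
        have Wne: "Wf \<noteq> []" using HL(1)[OF hh] unfolding Wf_def .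
        have fc: "filter (\<lambda>x. x = h \<or> x = h') (concat Ws') = Wf @ filter (\<lambda>x. x = h \<or> x = h') (concat Ws)"
          unfolding cWs' Wf_def by simp
        have T2: "no_adj_repeat (filter (\<lambda>z. z = (g,h) \<or> z = (g,h')) W) \<longleftrightarrow>
            no_adj_repeat (filter (\<lambda>x. x = h \<or> x = h') (concat Ws'))"
          unfolding W_def
          by (rule type2[OF _ ds _ q(1) q(2)[symmetric]]) (use gin su ss Wne fc in auto)
        show ?thesis
        proof (cases "EH h h'")
          case True
          have "no_adj_repeat (filter (\<lambda>x. x = h \<or> x = h') (concat Ws'))"
            using HL(4)[OF hh True] unfolding cWs' Ws_def t_def .
          then show ?thesis using ce True T2 unfolding alternate_def x y gg by simp
        next
          case False
          have "\<not> no_adj_repeat Wf" using HL(3)[OF hh] False unfolding Wf_def by simp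
          then have "\<not> no_adj_repeat (filter (\<lambda>x. x = h \<or> x = h') (concat Ws'))"
            unfolding fc nar_append by simp
          then show ?thesis using ce False T2 unfolding alternate_def x y gg by simp
        qed
      next
        case gg: False
        note GL = G_lemma[OF gin(1,2)[folded su] gg]
        show ?thesis
        proof (cases "h = h'")
          case hh: True
          have ce: "cart_edge EG EH x y \<longleftrightarrow> EG g g'" unfolding x y cart_edge_def using gg hh irrH by simp
          have EGa: "EG g g' \<longleftrightarrow> no_adj_repeat (filter (\<lambda>x. x = g \<or> x = g') u)"
            using rG gin gg unfolding alternate_def by simp
          have hp: "h \<in> set \<pi>" using gin sp by simp
          from GL(2) show ?thesis
          proof
            assume o: "filter (\<lambda>x. x = g \<or> x = g') (remdups u) = [g,g']"
            have "no_adj_repeat (filter (\<lambda>z. z = (g,h) \<or> z = (g',h)) W) \<longleftrightarrow> no_adj_repeat (filter (\<lambda>x. x = g \<or> x = g') u)"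
              unfolding W_def
              by (rule type1[OF o[folded \<sigma>_def] gg dWs' hp dp]) (use GL(1) o in simp)
            then show ?thesis using ce EGa unfolding alternate_def x y hh by simp
          next
            assume o: "filter (\<lambda>x. x = g \<or> x = g') (remdups u) = [g',g]"
            have o': "filter (\<lambda>x. x = g' \<or> x = g) \<sigma> = [g',g]" using o filt_comm unfolding \<sigma>_def by metis
            have r': "remdups (filter (\<lambda>x. x = g' \<or> x = g) u) = [g',g]" using GL(1) o filt_comm by metis
            have "no_adj_repeat (filter (\<lambda>z. z = (g',h) \<or> z = (g,h)) W) \<longleftrightarrow> no_adj_repeat (filter (\<lambda>x. x = g' \<or> x = g) u)"
              unfolding W_def
              by (rule type1[OF o' _ dWs' hp dp r']) (use gg in simp)
            then show ?thesis using ce EGa filt_comm symG unfolding alternate_def x y hh by metis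
          qed
        next
          case hh: False
          have ce: "\<not> cart_edge EG EH x y" unfolding x y cart_edge_def using gg hh by simp
          have hp: "h \<in> set \<pi>" "h' \<in> set \<pi>" using gin sp by auto
          have wne: "filter (\<lambda>x. x = h \<or> x = h') w \<noteq> []" "filter (\<lambda>x. x = h' \<or> x = h) w \<noteq> []"
            using H_lemma(1)[OF w(1) gin(3,4) hh kp[unfolded t_def]]
              H_lemma(1)[OF w(1) gin(4,3) _ kp[unfolded t_def]] hh by auto
          have hyp1: "no_adj_repeat (filter (\<lambda>x. x = h \<or> x = h') (w @ concat Ws)) \<and>
              (hd (filter (\<lambda>x. x = h \<or> x = h') w) = h' \<or>
              (hd (filter (\<lambda>x. x = h \<or> x = h') w) = h \<and> (\<exists>S\<in>set Ws. filter (\<lambda>x. x = h \<or> x = h') S = [h',h])))"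
            if "no_adj_repeat (filter (\<lambda>x. x = h \<or> x = h') w)"
            using H_hyp[OF w(1) gin(3,4) hh kp[unfolded t_def] that] unfolding Ws_def t_def .
          have hyp2: "no_adj_repeat (filter (\<lambda>x. x = h' \<or> x = h) (w @ concat Ws)) \<and>
              (hd (filter (\<lambda>x. x = h' \<or> x = h) w) = h \<or>
              (hd (filter (\<lambda>x. x = h' \<or> x = h) w) = h' \<and> (\<exists>S\<in>set Ws. filter (\<lambda>x. x = h' \<or> x = h) S = [h,h'])))"
            if "no_adj_repeat (filter (\<lambda>x. x = h' \<or> x = h) w)"
            using H_hyp[OF w(1) gin(4,3) _ kp[unfolded t_def] that] hh unfolding Ws_def t_def by auto
          have dW0: "\<forall>S\<in>set Ws. distinct S" using dWs by auto
          from GL(2) have "\<not> alternate W x y"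
          proof
            assume o: "filter (\<lambda>x. x = g \<or> x = g') (remdups u) = [g,g']"
            have "\<not> no_adj_repeat (filter (\<lambda>z. z = (g,h) \<or> z = (g',h')) W)"
              unfolding W_def Ws'_def
              by (rule type3[OF o[folded \<sigma>_def] gg hh dW0 _ dp hp wne(1)]) (use GL(1) o hyp1 in auto)
            then show ?thesis unfolding alternate_def x y .
          next
            assume o: "filter (\<lambda>x. x = g \<or> x = g') (remdups u) = [g',g]"
            have o': "filter (\<lambda>x. x = g' \<or> x = g) \<sigma> = [g',g]" using o filt_comm unfolding \<sigma>_def by metis
            have r': "remdups (filter (\<lambda>x. x = g' \<or> x = g) u) = [g',g]" using GL(1) o filt_comm by metis
            have "\<not> no_adj_repeat (filter (\<lambda>z. z = (g',h') \<or> z = (g,h)) W)"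
              unfolding W_def Ws'_def
              by (rule type3[OF o' _ _ dW0 r' dp hp(2,1) wne(2)]) (use gg hh hyp2 in auto)
            then show ?thesis unfolding alternate_def x y using filt_comm by metis
          qed
          then show ?thesis using ce by simp
        qed
      qed
    qed
  qed
  have le: "min_rep_length (VG \<times> VH) (cart_edge EG EH) \<le> length W"
    unfolding min_rep_length_def by (rule Least_le) (use rep in blast)
  have lp: "length \<pi> = card VH" unfolding \<pi>_def using sw by (simp add: length_remdups_card_conv)
  have ls: "length \<sigma> = card VG" unfolding \<sigma>_def using su by (simp add: length_remdups_card_conv)
  have lt: "length t = card VH" unfolding t_def using sw by (simp add: length_remdups_card_conv)
  have m1: "length t \<ge> 1" using tne by (cases t) auto
  have "length (concat Ws @ [t ! (length t - 1)]) = length (concat (replicate (length t) t))"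
    unfolding Ws_def using wins_concat[OF m1 kl] by simp
  then have lW: "length (concat Ws) + 1 = card VH * card VH" using lt by (simp add: length_concat sum_list_replicate)
  have lW': "length (concat Ws) = card VH * card VH - 1" using lW by simp
  have "length W = length u * card VH + card VG * (length w + (card VH * card VH - 1))"
    unfolding W_def using lp ls lW' by (simp add: length_blk length_tblk cWs')
  also have "\<dots> = card VH * min_rep_length VG EG + card VG * min_rep_length VH EH + (card VH ^ 2 - 1) * card VG"
    using u(2) w(2) by (simp add: power2_eq_square algebra_simps)
  finally show ?thesis using le by simp
qed

end
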